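(* Let $p$ be a prime, $t\ge 1$, and let $(K_n,\alpha)$ be an edge-labeled complete graph over $\mathbb{Z}/p^t\mathbb{Z}$ with ordered edge labels $p^{i_1},\dots,p^{i_{r_n}}$. (1) If $p^{i_{r_n}}\mid\cdots\mid p^{i_2}\mid p^{i_1}\mid p^t$ with $i_{r_n}\ge1$ and $i_1<t$, then the set consisting of $(1,\dots,1)$ and, for $j=2,\dots,n$, the vector with $p^{i_{r_{j-1}+1}}$ at $v_j$ and $0$ elsewhere, is a minimum flow-up generating set of $[\mathbb{Z}/p^t\mathbb{Z}]_{(K_n,\alpha)}$; thus the rank is $n$. (2) If $p^{i_1}\mid p^{i_2}\mid\cdots\mid p^{i_{r_n}}\mid p^t$ with $i_1\ge1$ and $i_{r_n}<t$, then the set consisting of $(1,\dots,1)$ and, for $j=2,\dots,n$, the vector with entries $p^{i_{r_n-(n-j)}}$ at $v_j,\dots,v_n$ and $0$ at $v_1,\dots,v_{j-1}$, is a minimum flow-up generating set of $[\mathbb{Z}/p^t\mathbb{Z}]_{(K_n,\alpha)}$; thus the rank is $n$.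
   Context: A spline on an edge-labeled graph $(G,\alpha)$ over $\mathbb{Z}/m\mathbb{Z}$ (edges labeled by nonzero ideals) is a vector $(f_{v_1},\dots,f_{v_n})\in(\mathbb{Z}/m\mathbb{Z})^n$ with $f_{v_i}-f_{v_j}\in\alpha(v_iv_j)$ for every edge; the splines form a $\mathbb{Z}$-module $[\mathbb{Z}/m\mathbb{Z}]_{(G,\alpha)}$. An $i$-th flow-up class is a spline with $f_{v_i}\ne0$ and $f_{v_t}=0$ for $t<i$. A minimum flow-up generating set is a generating set of the $\mathbb{Z}$-module of smallest possible size (the rank) consisting of flow-up classes. $K_n$ is the complete graph on $v_1,\dots,v_n$; $r_k=k(k-1)/2$; for $1\le j<k\le n$ the edge $v_jv_k$ is $e_{r_{k-1}+j}$. "Ordered edge labels $l_1,\dots,l_{r_n}$" means $\alpha(e_s)$ is the ideal generated by $l_s+m\mathbb{Z}$. *)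

theory Defs
  imports "HOL-Number_Theory.Number_Theory"
begin

text \<open>Vertices of K_n are 1..n. A vector in (Z/mZ)^n is a function nat => int that is zero
outside {1..n} and takes canonical representatives in {0..<m} on {1..n}.
Edge labels l :: nat => int indexed by 1..r_n; the label of edge e_s is the ideal
generated by l s + mZ.\<close>

definition r :: "nat \<Rightarrow> nat" where
  "r k = k * (k - 1) div 2"

definition edge_index :: "nat \<Rightarrow> nat \<Rightarrow> nat" where
  "edge_index j k = r (k - 1) + j"

definition is_vec :: "int \<Rightarrow> nat \<Rightarrow> (nat \<Rightarrow> int) \<Rightarrow> bool" where
  "is_vec m n f \<longleftrightarrow> (\<forall>v. v \<notin> {1..n} \<longrightarrow> f v = 0) \<and> (\<forall>v\<in>{1..n}. 0 \<le> f v \<and> f v < m)"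

definition in_ideal :: "int \<Rightarrow> int \<Rightarrow> int \<Rightarrow> bool" where
  "in_ideal m l x \<longleftrightarrow> (\<exists>c. [x = c * l] (mod m))"

definition splines :: "int \<Rightarrow> nat \<Rightarrow> (nat \<Rightarrow> int) \<Rightarrow> (nat \<Rightarrow> int) set" where
  "splines m n l = {f. is_vec m n f \<and>
     (\<forall>j k. 1 \<le> j \<and> j < k \<and> k \<le> n \<longrightarrow> in_ideal m (l (edge_index j k)) (f j - f k))}"

definition zspan :: "int \<Rightarrow> nat \<Rightarrow> (nat \<Rightarrow> int) set \<Rightarrow> (nat \<Rightarrow> int) set" where
  "zspan m n S = {f. \<exists>c :: (nat \<Rightarrow> int) \<Rightarrow> int.
      \<forall>v. f v = (if v \<in> {1..n} then (\<Sum>g\<in>S. c g * g v) mod m else 0)}"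

definition generating_set :: "int \<Rightarrow> nat \<Rightarrow> (nat \<Rightarrow> int) \<Rightarrow> (nat \<Rightarrow> int) set \<Rightarrow> bool" where
  "generating_set m n l S \<longleftrightarrow> finite S \<and> S \<subseteq> splines m n l \<and> zspan m n S = splines m n l"

definition spline_rank :: "int \<Rightarrow> nat \<Rightarrow> (nat \<Rightarrow> int) \<Rightarrow> nat" where
  "spline_rank m n l = (LEAST k. \<exists>S. generating_set m n l S \<and> card S = k)"

definition flow_up :: "nat \<Rightarrow> (nat \<Rightarrow> int) \<Rightarrow> nat \<Rightarrow> bool" where
  "flow_up n f i \<longleftrightarrow> i \<in> {1..n} \<and> f i \<noteq> 0 \<and> (\<forall>t. 1 \<le> t \<and> t < i \<longrightarrow> f t = 0)"

definition min_flow_up_gen :: "int \<Rightarrow> nat \<Rightarrow> (nat \<Rightarrow> int) \<Rightarrow> (nat \<Rightarrow> int) set \<Rightarrow> bool" where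
  "min_flow_up_gen m n l S \<longleftrightarrow> generating_set m n l S \<and> card S = spline_rank m n l \<and>
     (\<forall>f\<in>S. \<exists>i. flow_up n f i)"

definition ones :: "nat \<Rightarrow> nat \<Rightarrow> int" where
  "ones n v = (if v \<in> {1..n} then 1 else 0)"

end

theory Submission
  imports Defs
begin


lemma in_ideal_add: "in_ideal m l a \<Longrightarrow> in_ideal m l b \<Longrightarrow> in_ideal m l (a+b)"
  unfolding in_ideal_def
proof -
  assume "\<exists>c. [a = c * l] (mod m)" "\<exists>c. [b = c * l] (mod m)"
  then obtain c1 c2 where "[a = c1 * l] (mod m)" "[b = c2 * l] (mod m)" by blast
  then have "[a + b = (c1 + c2) * l] (mod m)" by (metis cong_add distrib_right)
  then show "\<exists>c. [a + b = c * l] (mod m)" by blast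
qed

lemma in_ideal_mult: "in_ideal m l a \<Longrightarrow> in_ideal m l (k*a)"
  unfolding in_ideal_def
proof -
  assume "\<exists>c. [a = c * l] (mod m)"
  then obtain c1 where "[a = c1 * l] (mod m)" by blast
  then have "[k * a = (k * c1) * l] (mod m)" by (metis cong_scalar_left mult.assoc)
  then show "\<exists>c. [k*a = c * l] (mod m)" by blast
qed

lemma in_ideal_zero: "in_ideal m l 0"
  unfolding in_ideal_def by (rule exI[of _ 0]) simp

lemma in_ideal_sum: "finite A \<Longrightarrow> (\<And>x. x \<in> A \<Longrightarrow> in_ideal m l (f x)) \<Longrightarrow> in_ideal m l (sum f A)"
  by (induction A rule: finite_induct) (auto intro: in_ideal_add in_ideal_zero)

lemma in_ideal_cong: "[a = b] (mod m) \<Longrightarrow> in_ideal m l b \<Longrightarrow> in_ideal m l a"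
  unfolding in_ideal_def using cong_trans by blast

lemma in_ideal_of_dvd: "l dvd (x::int) \<Longrightarrow> in_ideal m l x"
  unfolding in_ideal_def by (rule exI[of _ "x div l"]) simp

lemma in_ideal_dvd:
  fixes p :: int
  assumes "in_ideal (p^t) (p^e) x" "e \<le> t"
  shows "p^e dvd x"
proof -
  obtain c where "[x = c * p^e] (mod p^t)" using assms(1) unfolding in_ideal_def by blast
  then have "p^t dvd x - c * p^e" by (simp add: cong_iff_dvd_diff)
  moreover have "p^e dvd p^t" using assms(2) by (simp add: le_imp_power_dvd)
  ultimately have "p^e dvd x - c * p^e" using dvd_trans by blast
  then show ?thesis by (metis dvd_diff_commute dvd_triv_right dvd_add_left_iff diff_add_cancel)
qed

lemma key_div:
  fixes p a y :: int
  assumes "d < t" "p \<noteq> 0" "[a = p^d * y] (mod p^t)"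
  shows "(a div p^d) mod p = y mod p"
proof -
  have "p^t dvd a - p^d * y" using assms(3) by (simp add: cong_iff_dvd_diff)
  then obtain z where z: "a - p^d * y = p^t * z" by blast
  have pt: "p^t = p^d * (p * p^(t - d - 1))" using assms(1)
    by (metis Suc_diff_Suc diff_Suc_1 le_add_diff_inverse less_imp_le power_Suc power_add)
  have "a = p^d * (y + p * p^(t-d-1) * z)" using z pt by (simp add: algebra_simps)
  then have "a div p^d = y + p * (p^(t-d-1) * z)" using assms(2) by (simp add: mult.assoc)
  then show ?thesis by simp
qed

lemma zspan_sub:
  assumes "S \<subseteq> splines m n l" "finite S" "m > 0"
  shows "zspan m n S \<subseteq> splines m n l"
proof
  fix f assume "f \<in> zspan m n S"
  then obtain c where c: "\<And>v. f v = (if v \<in> {1..n} then (\<Sum>g\<in>S. c g * g v) mod m else 0)"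
    unfolding zspan_def by blast
  have vec: "is_vec m n f" unfolding is_vec_def c using assms(3) by auto
  have "in_ideal m (l (edge_index j k)) (f j - f k)" if jk: "1 \<le> j" "j < k" "k \<le> n" for j k
  proof -
    have "[f j - f k = (\<Sum>g\<in>S. c g * g j) - (\<Sum>g\<in>S. c g * g k)] (mod m)"
      using jk unfolding c by (simp add: cong_def mod_diff_eq)
    also have "(\<Sum>g\<in>S. c g * g j) - (\<Sum>g\<in>S. c g * g k) = (\<Sum>g\<in>S. c g * (g j - g k))"
      by (simp add: sum_subtractf right_diff_distrib)
    finally have cg: "[f j - f k = (\<Sum>g\<in>S. c g * (g j - g k))] (mod m)" .
    have "in_ideal m (l (edge_index j k)) (\<Sum>g\<in>S. c g * (g j - g k))"
    proof (rule in_ideal_sum[OF assms(2)])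
      fix g assume "g \<in> S"
      then have "g \<in> splines m n l" using assms(1) by blast
      then have "in_ideal m (l (edge_index j k)) (g j - g k)" using jk unfolding splines_def by blast
      then show "in_ideal m (l (edge_index j k)) (c g * (g j - g k))" by (rule in_ideal_mult)
    qed
    then show ?thesis using cg in_ideal_cong by blast
  qed
  then show "f \<in> splines m n l" unfolding splines_def using vec by blast
qed


definition psi :: "int \<Rightarrow> nat \<Rightarrow> (nat \<Rightarrow> nat) \<Rightarrow> (nat \<Rightarrow> nat) \<Rightarrow> (nat \<Rightarrow> int) \<Rightarrow> nat \<Rightarrow> int" where
  "psi p n pv d f = (\<lambda>v. if v \<in> {1..n} then (if v = 1 then f 1 mod p
       else ((f v - f (pv v)) div p ^ d v) mod p) else undefined)"

definition Fc :: "int \<Rightarrow> nat \<Rightarrow> (nat \<Rightarrow> nat) \<Rightarrow> (nat \<Rightarrow> nat) \<Rightarrow> (nat \<Rightarrow> int) set \<Rightarrow> ((nat \<Rightarrow> int) \<Rightarrow> int) \<Rightarrow> nat \<Rightarrow> int" where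
  "Fc p n pv d S c = (\<lambda>v. if v \<in> {1..n} then (if v = 1 then (\<Sum>g\<in>S. c g * g 1) mod p
       else (\<Sum>g\<in>S. c g * ((g v - g (pv v)) div p ^ d v)) mod p) else undefined)"

lemma sum_mod_coef: "(\<Sum>g\<in>S. a g * b g) mod (p::int) = (\<Sum>g\<in>S. (a g mod p) * b g) mod p"
proof -
  have "(\<Sum>g\<in>S. a g * b g) mod p = (\<Sum>g\<in>S. (a g * b g) mod p) mod p" by (simp add: mod_sum_eq)
  also have "\<dots> = (\<Sum>g\<in>S. ((a g mod p) * b g) mod p) mod p" by (simp add: mod_mult_left_eq)
  also have "\<dots> = (\<Sum>g\<in>S. (a g mod p) * b g) mod p" by (simp add: mod_sum_eq)
  finally show ?thesis .
qed

lemma lower_bound: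
  fixes p :: int
  assumes pr: "prime p" and t1: "t \<ge> 1" and m: "m = p ^ t"
    and H1: "\<forall>j\<in>{2..n}. pv j \<in> {1..n} \<and> d j < t \<and> (\<forall>g\<in>splines m n l. p ^ d j dvd g j - g (pv j))"
    and H2: "\<forall>x\<in>PiE {1..n} (\<lambda>_. {0..<p}). \<exists>f\<in>splines m n l. psi p n pv d f = x"
    and gen: "generating_set m n l S"
  shows "n \<le> card S"
proof -
  have p1: "p > 1" using pr prime_gt_1_int by blast
  have fin: "finite S" and Ssub: "S \<subseteq> splines m n l" and zs: "zspan m n S = splines m n l"
    using gen unfolding generating_set_def by auto
  have pdm: "p dvd m" using t1 m by (simp add: dvd_power)
  have sub1: "PiE {1..n} (\<lambda>_. {0..<p}) \<subseteq> psi p n pv d ` splines m n l"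
    using H2 by (metis image_eqI subsetI)
  have sub2: "psi p n pv d ` splines m n l \<subseteq> Fc p n pv d S ` PiE S (\<lambda>_. {0..<p})"
  proof
    fix y assume "y \<in> psi p n pv d ` splines m n l"
    then obtain f where f: "f \<in> splines m n l" and y: "y = psi p n pv d f" by blast
    then have "f \<in> zspan m n S" using zs by simp
    then obtain c where c: "\<And>v. f v = (if v \<in> {1..n} then (\<Sum>g\<in>S. c g * g v) mod m else 0)"
      unfolding zspan_def by blast
    define c' where "c' = restrict (\<lambda>g. c g mod p) S"
    have c'in: "c' \<in> PiE S (\<lambda>_. {0..<p})" unfolding c'_def using p1 by auto
    have sc: "(\<Sum>g\<in>S. c' g * b g) = (\<Sum>g\<in>S. (c g mod p) * b g)" for b
      unfolding c'_def by (rule sum.cong) auto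
    have "psi p n pv d f = Fc p n pv d S c'"
    proof
      fix v
      show "psi p n pv d f v = Fc p n pv d S c' v"
      proof (cases "v \<in> {1..n}")
        case False then show ?thesis unfolding psi_def Fc_def by (simp only: if_False)
      next
        case vin: True
        show ?thesis
        proof (cases "v = 1")
          case True
          have "f 1 mod p = (\<Sum>g\<in>S. c g * g 1) mod p"
            using vin \<open>v = 1\<close> c[of 1] pdm by (simp add: mod_mod_cancel)
          then show ?thesis using vin True unfolding psi_def Fc_def by (simp add: sc sum_mod_coef[symmetric])
        next
          case False
          then have v2: "v \<in> {2..n}" using vin by auto
          then have piv: "pv v \<in> {1..n}" and dv: "d v < t"
            and dvg: "\<And>g. g \<in> splines m n l \<Longrightarrow> p ^ d v dvd g v - g (pv v)" using H1 by auto
          define h where "h g = (g v - g (pv v)) div p ^ d v" for g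
          have hg: "g v - g (pv v) = p ^ d v * h g" if "g \<in> S" for g
            unfolding h_def using dvg[of g] that Ssub by auto
          have "[f v - f (pv v) = (\<Sum>g\<in>S. c g * g v) - (\<Sum>g\<in>S. c g * g (pv v))] (mod m)"
            using vin piv unfolding c by (simp add: cong_def mod_diff_eq)
          also have "(\<Sum>g\<in>S. c g * g v) - (\<Sum>g\<in>S. c g * g (pv v)) = (\<Sum>g\<in>S. c g * (g v - g (pv v)))"
            by (simp add: sum_subtractf right_diff_distrib)
          also have "\<dots> = (\<Sum>g\<in>S. p ^ d v * (c g * h g))"
            by (rule sum.cong) (auto simp: hg)
          also have "\<dots> = p ^ d v * (\<Sum>g\<in>S. c g * h g)" by (simp add: sum_distrib_left)
          finally have "((f v - f (pv v)) div p ^ d v) mod p = (\<Sum>g\<in>S. c g * h g) mod p"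
            using key_div[OF dv] p1 m by simp
          then show ?thesis using vin False unfolding psi_def Fc_def
            by (simp add: sc sum_mod_coef[symmetric] h_def)
        qed
      qed
    qed
    then show "y \<in> Fc p n pv d S ` PiE S (\<lambda>_. {0..<p})" using y c'in by blast
  qed
  have "card (PiE {1..n} (\<lambda>_. {0..<p})) \<le> card (Fc p n pv d S ` PiE S (\<lambda>_. {0..<p}))"
    by (rule card_mono) (use sub1 sub2 fin in \<open>auto intro!: finite_PiE\<close>)
  also have "\<dots> \<le> card (PiE S (\<lambda>_. {0..<p}))" by (rule card_image_le) (use fin in \<open>auto intro!: finite_PiE\<close>)
  finally have "nat p ^ n \<le> nat p ^ card S" using fin by (simp add: card_PiE)
  moreover have "1 < nat p" using p1 by simp
  ultimately show ?thesis using power_le_imp_le_exp by blast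
qed


lemma ones_spline: "m > 1 \<Longrightarrow> ones n \<in> splines m n l"
  unfolding splines_def is_vec_def ones_def by (auto intro: in_ideal_zero)

lemma generic:
  fixes p :: int and G :: "nat \<Rightarrow> nat \<Rightarrow> int"
  assumes pr: "prime p" and t1: "t \<ge> 1" and n1: "n \<ge> 1" and m: "m = p ^ t"
    and Gspl: "\<forall>j\<in>{2..n}. G j \<in> splines m n l"
    and Gflow: "\<forall>j\<in>{2..n}. G j j \<noteq> 0 \<and> (\<forall>v. v < j \<longrightarrow> G j v = 0)"
    and rep: "\<forall>f\<in>splines m n l. \<exists>x. \<forall>v\<in>{1..n}. f v = (x 1 + (\<Sum>k=2..n. x k * G k v)) mod m"
    and H1: "\<forall>j\<in>{2..n}. pv j \<in> {1..n} \<and> d j < t \<and> (\<forall>g\<in>splines m n l. p ^ d j dvd g j - g (pv j))"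
    and H3: "\<forall>j\<in>{2..n}. \<forall>k\<in>{2..n}. G k j - G k (pv j) = (if k = j then p ^ d j else 0)"
  shows "let S = insert (ones n) (G ` {2..n})
         in min_flow_up_gen m n l S \<and> card S = n \<and> spline_rank m n l = n"
proof -
  define S where "S = insert (ones n) (G ` {2..n})"
  have p1: "p > 1" using pr prime_gt_1_int by blast
  have m1: "m > 1" using m t1 p1 by simp
  have inj: "inj_on G {2..n}"
  proof
    fix a b assume ab: "a \<in> {2..n}" "b \<in> {2..n}" "G a = G b"
    show "a = b"
    proof (rule ccontr)
      assume "a \<noteq> b"
      then consider "a < b" | "b < a" by linarith
      then show False
        using Gflow ab by cases (metis, metis)
    qed
  qed
  have notin: "ones n \<notin> G ` {2..n}"
  proof
    assume "ones n \<in> G ` {2..n}"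
    then obtain j where "j \<in> {2..n}" "ones n = G j" by blast
    then have "ones n 1 = 0" using Gflow by auto
    then show False using n1 unfolding ones_def by simp
  qed
  have finS: "finite S" unfolding S_def by simp
  have cardS: "card S = n" unfolding S_def using notin inj n1
    by (simp add: card_image)
  have Ssub: "S \<subseteq> splines m n l" unfolding S_def using Gspl ones_spline[OF m1] by auto
  have sumS: "(\<Sum>g\<in>S. c g * g v) = c (ones n) * ones n v + (\<Sum>j=2..n. c (G j) * G j v)" for c v
    unfolding S_def using notin inj by (simp add: sum.reindex)
  define cx where "cx x = (\<lambda>g. if g = ones n then x 1 else x (inv_into {2..n} G g))" for x :: "nat \<Rightarrow> int"
  have cx1: "cx x (ones n) = x 1" for x unfolding cx_def by simp
  have cx2: "cx x (G j) = x j" if "j \<in> {2..n}" for x j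
  proof -
    have "G j \<noteq> ones n" using notin that by (metis image_eqI)
    then show ?thesis unfolding cx_def using that inj by simp
  qed
  have inspan: "(\<lambda>v. if v \<in> {1..n} then (x 1 + (\<Sum>k=2..n. x k * G k v)) mod m else 0) \<in> zspan m n S" for x
  proof -
    have "(\<Sum>g\<in>S. cx x g * g v) = x 1 + (\<Sum>k=2..n. x k * G k v)" if "v \<in> {1..n}" for v
      unfolding sumS cx1 using that by (simp add: cx2 ones_def)
    then show ?thesis unfolding zspan_def by (intro CollectI exI[of _ "cx x"]) auto
  qed
  have zeq: "zspan m n S = splines m n l"
  proof
    show "zspan m n S \<subseteq> splines m n l" using zspan_sub[OF Ssub finS] m1 by simp
  next
    show "splines m n l \<subseteq> zspan m n S"
    proof
      fix f assume f: "f \<in> splines m n l"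
      then obtain x where x: "\<forall>v\<in>{1..n}. f v = (x 1 + (\<Sum>k=2..n. x k * G k v)) mod m" using rep by blast
      have "f = (\<lambda>v. if v \<in> {1..n} then (x 1 + (\<Sum>k=2..n. x k * G k v)) mod m else 0)"
        using x f unfolding splines_def is_vec_def by auto
      then show "f \<in> zspan m n S" using inspan by simp
    qed
  qed
  have gen: "generating_set m n l S" unfolding generating_set_def using finS Ssub zeq by simp
  have lb: "n \<le> card S'" if "generating_set m n l S'" for S'
  proof (rule lower_bound[OF pr t1 m H1 _ that])
    show "\<forall>x\<in>PiE {1..n} (\<lambda>_. {0..<p}). \<exists>f\<in>splines m n l. psi p n pv d f = x"
    proof
      fix x assume xin: "x \<in> PiE {1..n} (\<lambda>_. {0..<p})"
      define f where "f = (\<lambda>v. if v \<in> {1..n} then (x 1 + (\<Sum>k=2..n. x k * G k v)) mod m else 0)"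
      have fs: "f \<in> splines m n l" using inspan zeq unfolding f_def by blast
      have "psi p n pv d f = x"
      proof
        fix v show "psi p n pv d f v = x v"
        proof (cases "v \<in> {1..n}")
          case False then show ?thesis using xin unfolding psi_def by (simp only: if_False) (simp add: PiE_def extensional_def)
        next
          case vin: True
          have xr: "0 \<le> x v" "x v < p" using xin vin by auto
          show ?thesis
          proof (cases "v = 1")
            case True
            have "(\<Sum>k=2..n. x k * G k 1) = 0" using Gflow by (intro sum.neutral) auto
            then have "f 1 = x 1 mod m" unfolding f_def using n1 by simp
            then have "f 1 mod p = x 1 mod p" using m t1 by (simp add: mod_mod_cancel dvd_power)
            then show ?thesis using True xr vin unfolding psi_def by simp
          next
            case False
            then have v2: "v \<in> {2..n}" using vin by auto
            then have piv: "pv v \<in> {1..n}" and dv: "d v < t" using H1 by auto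
            have "[f v - f (pv v) = (x 1 + (\<Sum>k=2..n. x k * G k v)) - (x 1 + (\<Sum>k=2..n. x k * G k (pv v)))] (mod m)"
              using vin piv unfolding f_def by (simp add: cong_def mod_diff_eq)
            also have "(x 1 + (\<Sum>k=2..n. x k * G k v)) - (x 1 + (\<Sum>k=2..n. x k * G k (pv v)))
                = (\<Sum>k=2..n. x k * (G k v - G k (pv v)))"
              by (simp add: sum_subtractf right_diff_distrib)
            also have "\<dots> = (\<Sum>k=2..n. if k = v then x v * p ^ d v else 0)"
              by (rule sum.cong) (use H3 v2 in auto)
            also have "\<dots> = p ^ d v * x v" using v2 by (simp add: sum.delta)
            finally have "((f v - f (pv v)) div p ^ d v) mod p = x v mod p"
              using key_div[OF dv] p1 m by simp
            then show ?thesis using vin False xr unfolding psi_def by simp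
          qed
        qed
      qed
      then show "\<exists>f\<in>splines m n l. psi p n pv d f = x" using fs by blast
    qed
  qed
  have rank: "spline_rank m n l = n"
    unfolding spline_rank_def
  proof (rule Least_equality)
    show "\<exists>S. generating_set m n l S \<and> card S = n" using gen cardS by blast
  next
    fix k assume "\<exists>S. generating_set m n l S \<and> card S = k"
    then show "n \<le> k" using lb by blast
  qed
  have flow: "\<forall>f\<in>S. \<exists>i. flow_up n f i"
  proof
    fix f assume "f \<in> S"
    then consider "f = ones n" | j where "j \<in> {2..n}" "f = G j" unfolding S_def by blast
    then show "\<exists>i. flow_up n f i"
    proof cases
      case 1 then show ?thesis using n1 unfolding flow_up_def ones_def by (intro exI[of _ 1]) auto
    next
      case 2 then show ?thesis using Gflow unfolding flow_up_def by (intro exI[of _ j]) auto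
    qed
  qed
  show ?thesis unfolding Let_def S_def[symmetric] min_flow_up_gen_def
    using gen cardS rank flow by simp
qed


lemma r_Suc: "r (Suc k) = r k + k"
proof -
  have "even (k * (k - 1))" by (cases k) auto
  then have "Suc k * k = k * (k - 1) + 2 * k" by (cases k) (auto simp: algebra_simps)
  then show ?thesis unfolding r_def using \<open>even (k * (k - 1))\<close> by (metis add.commute div_mult_self2 diff_Suc_1 zero_neq_numeral)
qed

lemma r_mono: "a \<le> b \<Longrightarrow> r a \<le> r b"
  by (induction b rule: dec_induct) (auto simp: r_Suc)

lemma r_pred: "k \<ge> 1 \<Longrightarrow> r k = r (k - 1) + (k - 1)"
  by (cases k) (auto simp: r_Suc)

lemma edge_le: assumes "1 \<le> u" "u < w" "w \<le> n" shows "r (w - 1) + u \<le> r n"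
proof -
  have "r (w - 1) + u \<le> r w" using r_pred[of w] assms by simp
  also have "\<dots> \<le> r n" using r_mono assms by simp
  finally show ?thesis .
qed

lemma pow_dvd_le:
  fixes p :: int assumes "prime p" "p ^ a dvd p ^ b" shows "a \<le> b"
  using assms dvd_power_iff[of p a b] by (metis not_prime_0 not_prime_unit)

lemma dec_mono:
  assumes "\<forall>s. 1 \<le> s \<and> s < R \<longrightarrow> (ie (Suc s) :: nat) \<le> ie s" "1 \<le> s" "s \<le> s'" "s' \<le> R"
  shows "ie s' \<le> ie s"
  using assms(3,4)
proof (induction s' rule: dec_induct)
  case base then show ?case by simp
next
  case (step k) then show ?case using assms(1,2) by (metis le_trans order_le_less_trans le_eq_less_or_eq Suc_leD)
qed

lemma inc_mono:
  assumes "\<forall>s. 1 \<le> s \<and> s < R \<longrightarrow> (ie s :: nat) \<le> ie (Suc s)" "1 \<le> s" "s \<le> s'" "s' \<le> R"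
  shows "ie s \<le> ie s'"
  using assms(3,4)
proof (induction s' rule: dec_induct)
  case base then show ?case by simp
next
  case (step k) then show ?case using assms(1,2) by (metis le_trans order_le_less_trans le_eq_less_or_eq Suc_leD)
qed

lemma vec_bounds: "f \<in> splines m n l \<Longrightarrow> v \<in> {1..n} \<Longrightarrow> 0 \<le> f v \<and> f v < m"
  unfolding splines_def is_vec_def by blast

lemma edge_dvd:
  fixes p :: int
  assumes "f \<in> splines (p^t) n (\<lambda>s. p ^ ie s)" "1 \<le> u" "u < w" "w \<le> n" "ie (r (w - 1) + u) \<le> t"
  shows "p ^ ie (r (w - 1) + u) dvd f u - f w"
proof -
  have "in_ideal (p^t) (p ^ ie (r (w - 1) + u)) (f u - f w)"
    using assms(1-4) unfolding splines_def edge_index_def by auto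
  then show ?thesis using in_ideal_dvd assms(5) by blast
qed


lemma part1:
  fixes p :: int and t n :: nat and ie :: "nat \<Rightarrow> nat"
  assumes pr: "prime p" and t1: "t \<ge> 1" and n1: "n \<ge> 1"
    and dec: "\<forall>s. 1 \<le> s \<and> s < r n \<longrightarrow> p ^ ie (Suc s) dvd p ^ ie s" and lt: "ie 1 < t"
  shows "let S = insert (ones n)
                 ((\<lambda>j. \<lambda>v. if v = j then p ^ ie (r (j - 1) + 1) else 0) ` {2..n})
           in min_flow_up_gen (p ^ t) n (\<lambda>s. p ^ ie s) S \<and> card S = n
              \<and> spline_rank (p ^ t) n (\<lambda>s. p ^ ie s) = n"
proof -
  define a where "a j = ie (r (j - 1) + 1)" for j
  define G where "G = (\<lambda>j. \<lambda>v. if v = j then p ^ ie (r (j - 1) + 1) else (0::int))"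
  define l where "l = (\<lambda>s. p ^ ie s)"
  have p1: "p > 1" using pr prime_gt_1_int by blast
  have dec': "\<forall>s. 1 \<le> s \<and> s < r n \<longrightarrow> ie (Suc s) \<le> ie s" using dec pow_dvd_le[OF pr] by blast
  have mono: "ie s' \<le> ie s" if "1 \<le> s" "s \<le> s'" "s' \<le> r n" for s s'
    using dec_mono[OF dec' that] .
  have idx: "1 \<le> r (j - 1) + 1 \<and> r (j - 1) + 1 \<le> r n" if "j \<in> {2..n}" for j
    using edge_le[of 1 j n] that by auto
  have alt: "a j < t" if "j \<in> {2..n}" for j
    using mono[of 1 "r (j - 1) + 1"] idx[OF that] lt unfolding a_def by simp
  have elt: "ie (r (w - 1) + u) \<le> t" if "1 \<le> u" "u < w" "w \<le> n" for u w
    using mono[of 1 "r (w - 1) + u"] edge_le[OF that] that lt by simp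
  have D1: "p ^ a j dvd g j - g 1" if "g \<in> splines (p^t) n l" "j \<in> {2..n}" for g j
  proof -
    have "p ^ a j dvd g 1 - g j" using edge_dvd[of g p t n ie 1 j] that elt[of 1 j] unfolding a_def l_def by auto
    then show ?thesis by (simp add: dvd_diff_commute)
  qed
  have "let S = insert (ones n) (G ` {2..n})
         in min_flow_up_gen (p^t) n l S \<and> card S = n \<and> spline_rank (p^t) n l = n"
  proof (rule generic[OF pr t1 n1 refl, where pv = "\<lambda>_. 1" and d = a])
    show "\<forall>j\<in>{2..n}. G j \<in> splines (p ^ t) n l"
    proof
      fix j assume j: "j \<in> {2..n}"
      have vec: "is_vec (p^t) n (G j)" unfolding is_vec_def G_def
        using j alt[OF j] p1 unfolding a_def by (auto intro: power_strict_increasing)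
      have "in_ideal (p^t) (l (edge_index u w)) (G j u - G j w)" if uw: "1 \<le> u" "u < w" "w \<le> n" for u w
      proof -
        have "p ^ ie (r (w - 1) + u) dvd G j u - G j w"
        proof (cases "u = j \<or> w = j")
          case True
          have "r (j - 1) + 1 \<le> r (w - 1) + u"
          proof (cases "w = j")
            case True then show ?thesis using uw by simp
          next
            case False
            then have "u = j" using \<open>u = j \<or> w = j\<close> by simp
            then have "r j \<le> r (w - 1)" using uw r_mono by simp
            moreover have "r j = r (j - 1) + (j - 1)" using r_pred j by simp
            moreover have "j \<ge> 2" using j by simp
            ultimately show ?thesis using \<open>u = j\<close> by linarith
          qed
          then have "ie (r (w - 1) + u) \<le> a j" using mono idx[OF j] edge_le[OF uw] unfolding a_def by simp
          then have "p ^ ie (r (w - 1) + u) dvd p ^ a j" by (rule le_imp_power_dvd)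
          then show ?thesis using True uw unfolding G_def a_def by auto
        next
          case False then show ?thesis unfolding G_def by simp
        qed
        then show ?thesis unfolding l_def edge_index_def by (rule in_ideal_of_dvd)
      qed
      then show "G j \<in> splines (p ^ t) n l" unfolding splines_def using vec by blast
    qed
  next
    show "\<forall>j\<in>{2..n}. G j j \<noteq> 0 \<and> (\<forall>v<j. G j v = 0)" unfolding G_def using p1 by auto
  next
    show "\<forall>f\<in>splines (p ^ t) n l. \<exists>x. \<forall>v\<in>{1..n}. f v = (x 1 + (\<Sum>k = 2..n. x k * G k v)) mod p ^ t"
    proof
      fix f assume f: "f \<in> splines (p ^ t) n l"
      define x where "x k = (if k = 1 then f 1 else (f k - f 1) div p ^ a k)" for k
      have "f v = (x 1 + (\<Sum>k = 2..n. x k * G k v)) mod p ^ t" if v: "v \<in> {1..n}" for v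
      proof -
        have "(\<Sum>k = 2..n. x k * G k v) = (\<Sum>k = 2..n. if k = v then x v * p ^ a v else 0)"
          by (rule sum.cong) (auto simp: G_def a_def)
        also have "\<dots> = f v - f 1"
        proof (cases "v = 1")
          case True then show ?thesis by simp
        next
          case False
          then have v2: "v \<in> {2..n}" using v by auto
          then have "(\<Sum>k = 2..n. if k = v then x v * p ^ a v else 0) = x v * p ^ a v" by simp
          also have "\<dots> = f v - f 1" using D1[OF f v2] False unfolding x_def by simp
          finally show ?thesis .
        qed
        finally show ?thesis unfolding x_def using vec_bounds[OF f v] by simp
      qed
      then show "\<exists>x. \<forall>v\<in>{1..n}. f v = (x 1 + (\<Sum>k = 2..n. x k * G k v)) mod p ^ t" by blast
    qed
  next
    show "\<forall>j\<in>{2..n}. 1 \<in> {1..n} \<and> a j < t \<and> (\<forall>g\<in>splines (p ^ t) n l. p ^ a j dvd g j - g 1)"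
      using alt D1 n1 by auto
  next
    show "\<forall>j\<in>{2..n}. \<forall>k\<in>{2..n}. G k j - G k 1 = (if k = j then p ^ a j else 0)"
      unfolding G_def a_def by auto
  qed
  then show ?thesis unfolding G_def l_def .
qed


lemma telescope:
  fixes v :: nat and f :: "nat \<Rightarrow> int"
  assumes "1 \<le> v" shows "(\<Sum>k = 2..v. (f k - f (k - 1))) = f v - f 1"
  using assms
proof (induction v rule: dec_induct)
  case base then show ?case by simp
next
  case (step k)
  then have "{2..Suc k} = insert (Suc k) {2..k}" by auto
  then show ?case using step by simp
qed

lemma part2:
  fixes p :: int and t n :: nat and ie :: "nat \<Rightarrow> nat"
  assumes pr: "prime p" and t1: "t \<ge> 1" and n1: "n \<ge> 1"
    and inc: "\<forall>s. 1 \<le> s \<and> s < r n \<longrightarrow> p ^ ie s dvd p ^ ie (Suc s)" and lt: "ie (r n) < t"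
  shows "let S = insert (ones n)
                 ((\<lambda>j. \<lambda>v. if j \<le> v \<and> v \<le> n then p ^ ie (r n - (n - j)) else 0) ` {2..n})
           in min_flow_up_gen (p ^ t) n (\<lambda>s. p ^ ie s) S \<and> card S = n
              \<and> spline_rank (p ^ t) n (\<lambda>s. p ^ ie s) = n"
proof -
  define b where "b j = ie (r n - (n - j))" for j
  define G where "G = (\<lambda>j. \<lambda>v. if j \<le> v \<and> v \<le> n then p ^ ie (r n - (n - j)) else (0::int))"
  define l where "l = (\<lambda>s. p ^ ie s)"
  have p1: "p > 1" using pr prime_gt_1_int by blast
  have inc': "\<forall>s. 1 \<le> s \<and> s < r n \<longrightarrow> ie s \<le> ie (Suc s)" using inc pow_dvd_le[OF pr] by blast
  have mono: "ie s \<le> ie s'" if "1 \<le> s" "s \<le> s'" "s' \<le> r n" for s s'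
    using inc_mono[OF inc' that] .
  have rn: "r n = r (n - 1) + (n - 1)" using r_pred n1 by simp
  have bidx: "r n - (n - j) = r (n - 1) + (j - 1)" if "j \<in> {2..n}" for j
    using that rn by auto
  have bidx2: "1 \<le> r (n - 1) + (j - 1) \<and> r (n - 1) + (j - 1) \<le> r n" if "j \<in> {2..n}" for j
    using that rn by auto
  have bdef: "b j = ie (r (n - 1) + (j - 1))" if "j \<in> {2..n}" for j
    unfolding b_def using bidx[OF that] by simp
  have blt: "b j < t" if "j \<in> {2..n}" for j
    using mono[of "r (n - 1) + (j - 1)" "r n"] bidx2[OF that] lt bdef[OF that] by simp
  have elt: "ie (r (w - 1) + u) \<le> t" if "1 \<le> u" "u < w" "w \<le> n" for u w
    using mono[of "r (w - 1) + u" "r n"] edge_le[OF that] that lt by simp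
  have D2: "p ^ b j dvd g j - g (j - 1)" if g: "g \<in> splines (p^t) n l" and j: "j \<in> {2..n}" for g j
  proof -
    have "p ^ b j dvd g (j - 1) - g n"
      using edge_dvd[of g p t n ie "j - 1" n] g j elt[of "j - 1" n] bdef[OF j] unfolding l_def by auto
    moreover have "p ^ b j dvd g j - g n"
    proof (cases "j = n")
      case True then show ?thesis by simp
    next
      case False
      then have jn: "1 \<le> j" "j < n" "n \<le> n" using j by auto
      have "p ^ ie (r (n - 1) + j) dvd g j - g n"
        using edge_dvd[OF _ jn] g elt[OF jn] unfolding l_def by blast
      moreover have "b j \<le> ie (r (n - 1) + j)"
        using bdef[OF j] mono[of "r (n - 1) + (j - 1)" "r (n - 1) + j"] bidx2[OF j] edge_le[OF jn] by simp
      ultimately show ?thesis using le_imp_power_dvd dvd_trans by blast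
    qed
    ultimately have "p ^ b j dvd (g j - g n) - (g (j - 1) - g n)" by (rule dvd_diff[rotated])
    then show ?thesis by simp
  qed
  have "let S = insert (ones n) (G ` {2..n})
         in min_flow_up_gen (p^t) n l S \<and> card S = n \<and> spline_rank (p^t) n l = n"
  proof (rule generic[OF pr t1 n1 refl, where pv = "\<lambda>j. j - 1" and d = b])
    show "\<forall>j\<in>{2..n}. G j \<in> splines (p ^ t) n l"
    proof
      fix j assume j: "j \<in> {2..n}"
      have vec: "is_vec (p^t) n (G j)" unfolding is_vec_def G_def
        using j blt[OF j] p1 unfolding b_def by (auto intro: power_strict_increasing)
      have "in_ideal (p^t) (l (edge_index u w)) (G j u - G j w)" if uw: "1 \<le> u" "u < w" "w \<le> n" for u w
      proof -
        have "p ^ ie (r (w - 1) + u) dvd G j u - G j w"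
        proof (cases "u < j \<and> j \<le> w")
          case True
          have "r (w - 1) + u \<le> r (n - 1) + (j - 1)"
          proof -
            have "r (w - 1) \<le> r (n - 1)" using r_mono[of "w - 1" "n - 1"] uw by simp
            then show ?thesis using uw True by linarith
          qed
          then have "ie (r (w - 1) + u) \<le> b j" using mono bdef[OF j] bidx2[OF j] uw by simp
          then have "p ^ ie (r (w - 1) + u) dvd p ^ b j" by (rule le_imp_power_dvd)
          then show ?thesis using True uw unfolding G_def b_def by auto
        next
          case False then show ?thesis unfolding G_def using uw by auto
        qed
        then show ?thesis unfolding l_def edge_index_def by (rule in_ideal_of_dvd)
      qed
      then show "G j \<in> splines (p ^ t) n l" unfolding splines_def using vec by blast
    qed
  next
    show "\<forall>j\<in>{2..n}. G j j \<noteq> 0 \<and> (\<forall>v<j. G j v = 0)" unfolding G_def using p1 by auto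
  next
    show "\<forall>f\<in>splines (p ^ t) n l. \<exists>x. \<forall>v\<in>{1..n}. f v = (x 1 + (\<Sum>k = 2..n. x k * G k v)) mod p ^ t"
    proof
      fix f assume f: "f \<in> splines (p ^ t) n l"
      define x where "x k = (if k = 1 then f 1 else (f k - f (k - 1)) div p ^ b k)" for k
      have "f v = (x 1 + (\<Sum>k = 2..n. x k * G k v)) mod p ^ t" if v: "v \<in> {1..n}" for v
      proof -
        have "(\<Sum>k = 2..n. x k * G k v) = (\<Sum>k = 2..n. if k \<in> {..v} then f k - f (k - 1) else 0)"
        proof (rule sum.cong)
          fix k assume k: "k \<in> {2..n}"
          have "x k * p ^ b k = f k - f (k - 1)" using D2[OF f k] k unfolding x_def by simp
          then show "x k * G k v = (if k \<in> {..v} then f k - f (k - 1) else 0)"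
            using v unfolding G_def b_def by auto
        qed simp
        also have "\<dots> = (\<Sum>k \<in> {2..n} \<inter> {..v}. f k - f (k - 1))" by (rule sum.inter_restrict[symmetric]) simp
        also have "{2..n} \<inter> {..v} = {2..v}" using v by auto
        also have "(\<Sum>k = 2..v. f k - f (k - 1)) = f v - f 1" using telescope v by simp
        finally show ?thesis unfolding x_def using vec_bounds[OF f v] by simp
      qed
      then show "\<exists>x. \<forall>v\<in>{1..n}. f v = (x 1 + (\<Sum>k = 2..n. x k * G k v)) mod p ^ t" by blast
    qed
  next
    show "\<forall>j\<in>{2..n}. j - 1 \<in> {1..n} \<and> b j < t \<and> (\<forall>g\<in>splines (p ^ t) n l. p ^ b j dvd g j - g (j - 1))"
      using blt D2 by auto
  next
    show "\<forall>j\<in>{2..n}. \<forall>k\<in>{2..n}. G k j - G k (j - 1) = (if k = j then p ^ b j else 0)"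
      unfolding G_def b_def by auto
  qed
  then show ?thesis unfolding G_def l_def .
qed

theorem mainTheorem8:
  fixes p :: int and t n :: nat and ie :: "nat \<Rightarrow> nat"
  assumes "prime p" and "t \<ge> 1" and "n \<ge> 1"
  shows "((\<forall>s. 1 \<le> s \<and> s < r n \<longrightarrow> p ^ ie (Suc s) dvd p ^ ie s) \<and> p ^ ie 1 dvd p ^ t
           \<and> ie (r n) \<ge> 1 \<and> ie 1 < t \<longrightarrow>
          (let S = insert (ones n)
                 ((\<lambda>j. \<lambda>v. if v = j then p ^ ie (r (j - 1) + 1) else 0) ` {2..n})
           in min_flow_up_gen (p ^ t) n (\<lambda>s. p ^ ie s) S \<and> card S = n
              \<and> spline_rank (p ^ t) n (\<lambda>s. p ^ ie s) = n))
       \<and> ((\<forall>s. 1 \<le> s \<and> s < r n \<longrightarrow> p ^ ie s dvd p ^ ie (Suc s)) \<and> p ^ ie (r n) dvd p ^ t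
           \<and> ie 1 \<ge> 1 \<and> ie (r n) < t \<longrightarrow>
          (let S = insert (ones n)
                 ((\<lambda>j. \<lambda>v. if j \<le> v \<and> v \<le> n then p ^ ie (r n - (n - j)) else 0) ` {2..n})
           in min_flow_up_gen (p ^ t) n (\<lambda>s. p ^ ie s) S \<and> card S = n
              \<and> spline_rank (p ^ t) n (\<lambda>s. p ^ ie s) = n))"
  using part1[OF assms] part2[OF assms] by blast

end
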